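(* Let $\Psi$ be a root subsystem of $\Phi$, let $\Delta=(D_0,L_{\beta_1},D_1,\dots,L_{\beta_m},D_m)$ be a gallery in $\Psi$, let $i\in[0,m]$, and let $C\in\mathrm{Ch}_\Phi$ be a chamber lifting $D_i$. Then there exists a unique gallery in $\Phi$ that lifts $\Delta$ and whose $i$th chamber is $C$.
   Context: $E$ is a finite-dimensional real Euclidean space with inner product $(\cdot,\cdot)$; $\Phi\subset E$ is a finite (reduced) root system (not necessarily spanning, not necessarily crystallographic) with reflections $\omega_\alpha$ through $L_\alpha=\alpha^\perp$. A root subsystem is a nonempty $\Psi\subset\Phi$ stable under $\omega_\alpha$, $\alpha\in\Psi$. For $X\subset\Phi$, $\mathrm{Ch}_X$ is the set of connected components of $E\setminus\bigcup_{\alpha\in X}L_\alpha$. Chambers $C,D\in\mathrm{Ch}_X$ are connected through $L_\alpha$ if $\overline C\cap\overline D\cap L_\alpha$ has nonempty interior in $L_\alpha$. A gallery in $X$ (for $X=\Phi$ or a root subsystem) is a sequence $(C_0,L_{\alpha_1},C_1,\dots,L_{\alpha_n},C_n)$ with $C_j\in\mathrm{Ch}_X$, $\alpha_j\in X$, and $C_{j-1},C_j$ connected through $L_{\alpha_j}$ for all $j$; $C_j$ is its $j$th chamber and $(L_{\alpha_1},\dots,L_{\alpha_n})$ its sequence of walls. For $C\in\mathrm{Ch}_\Phi$, $\Phi^+(C)=\{\alpha\in\Phi:(e,\alpha)>0\ \forall e\in C\}$ and $\Phi^s(C)$ is the unique simple system of $\Phi$ contained in $\Phi^+(C)$; similarly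 $\Psi^s(D)$ for $D\in\mathrm{Ch}_\Psi$. A chamber $C\in\mathrm{Ch}_\Phi$ lifts $D\in\mathrm{Ch}_\Psi$ if $\Psi^s(D)\subset\Phi^s(C)$. A gallery $\Gamma$ in $\Phi$ lifts a gallery $\Delta$ in $\Psi$ if their sequences of walls coincide and, for each $j$, the $j$th chamber of $\Gamma$ lifts the $j$th chamber of $\Delta$. *)

theory Defs
  imports "HOL-Analysis.Analysis"
begin

definition refl_vec :: "'a::euclidean_space \<Rightarrow> 'a \<Rightarrow> 'a" where
  "refl_vec \<alpha> x = x - ((2 * (x \<bullet> \<alpha>)) / (\<alpha> \<bullet> \<alpha>)) *\<^sub>R \<alpha>"

definition hyp :: "'a::euclidean_space \<Rightarrow> 'a set" where
  "hyp \<alpha> = {x. x \<bullet> \<alpha> = 0}"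

text \<open>Finite reduced root system (not necessarily spanning or crystallographic).\<close>
definition root_system :: "'a::euclidean_space set \<Rightarrow> bool" where
  "root_system \<Phi> \<longleftrightarrow> finite \<Phi> \<and> 0 \<notin> \<Phi> \<and>
     (\<forall>\<alpha>\<in>\<Phi>. \<forall>\<beta>\<in>\<Phi>. refl_vec \<alpha> \<beta> \<in> \<Phi>) \<and>
     (\<forall>\<alpha>\<in>\<Phi>. \<forall>c::real. c *\<^sub>R \<alpha> \<in> \<Phi> \<longrightarrow> c = 1 \<or> c = -1)"

definition root_subsystem :: "'a::euclidean_space set \<Rightarrow> 'a set \<Rightarrow> bool" where
  "root_subsystem \<Phi> \<Psi> \<longleftrightarrow> \<Psi> \<noteq> {} \<and> \<Psi> \<subseteq> \<Phi> \<and> (\<forall>\<alpha>\<in>\<Psi>. \<forall>\<beta>\<in>\<Psi>. refl_vec \<alpha> \<beta> \<in> \<Psi>)"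

definition Ch :: "'a::euclidean_space set \<Rightarrow> 'a set set" where
  "Ch X = components (UNIV - (\<Union>\<alpha>\<in>X. hyp \<alpha>))"

definition connected_through :: "'a::euclidean_space set \<Rightarrow> 'a set \<Rightarrow> 'a set \<Rightarrow> bool" where
  "connected_through C D L \<longleftrightarrow>
     (\<exists>U. openin (top_of_set L) U \<and> U \<noteq> {} \<and> U \<subseteq> closure C \<inter> closure D \<inter> L)"

text \<open>A gallery is a pair (chambers C_0..C_n, walls L_1..L_n).\<close>
definition gallery :: "'a::euclidean_space set \<Rightarrow> 'a set list \<times> 'a set list \<Rightarrow> bool" where
  "gallery X G \<longleftrightarrow> (let Cs = fst G; Ws = snd G in
     length Cs = Suc (length Ws) \<and>
     (\<forall>j < length Cs. Cs ! j \<in> Ch X) \<and>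
     (\<forall>j < length Ws. \<exists>\<alpha>\<in>X. Ws ! j = hyp \<alpha> \<and>
          connected_through (Cs ! j) (Cs ! Suc j) (hyp \<alpha>)))"

definition pos_roots :: "'a::euclidean_space set \<Rightarrow> 'a set \<Rightarrow> 'a set" where
  "pos_roots \<Phi> C = {\<alpha>\<in>\<Phi>. \<forall>e\<in>C. e \<bullet> \<alpha> > 0}"

definition simple_system :: "'a::euclidean_space set \<Rightarrow> 'a set \<Rightarrow> bool" where
  "simple_system \<Phi> S \<longleftrightarrow> S \<subseteq> \<Phi> \<and> finite S \<and> independent S \<and>
     (\<forall>\<alpha>\<in>\<Phi>. \<exists>c. \<alpha> = (\<Sum>\<beta>\<in>S. c \<beta> *\<^sub>R \<beta>) \<and>
          ((\<forall>\<beta>\<in>S. c \<beta> \<ge> 0) \<or> (\<forall>\<beta>\<in>S. c \<beta> \<le> 0)))"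

definition simple_roots :: "'a::euclidean_space set \<Rightarrow> 'a set \<Rightarrow> 'a set" where
  "simple_roots \<Phi> C = (THE S. simple_system \<Phi> S \<and> S \<subseteq> pos_roots \<Phi> C)"

definition lifts_chamber :: "'a::euclidean_space set \<Rightarrow> 'a set \<Rightarrow> 'a set \<Rightarrow> 'a set \<Rightarrow> bool" where
  "lifts_chamber \<Phi> \<Psi> C D \<longleftrightarrow> simple_roots \<Psi> D \<subseteq> simple_roots \<Phi> C"

definition lifts_gallery :: "'a::euclidean_space set \<Rightarrow> 'a set \<Rightarrow>
    'a set list \<times> 'a set list \<Rightarrow> 'a set list \<times> 'a set list \<Rightarrow> bool" where
  "lifts_gallery \<Phi> \<Psi> \<Gamma> \<Delta> \<longleftrightarrow> snd \<Gamma> = snd \<Delta> \<and> length (fst \<Gamma>) = length (fst \<Delta>) \<and>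
     (\<forall>j < length (fst \<Gamma>). lifts_chamber \<Phi> \<Psi> (fst \<Gamma> ! j) (fst \<Delta> ! j))"

end

theory Submission
  imports Defs
begin


lemma refl_vec_adj: "refl_vec a x \<bullet> y = x \<bullet> refl_vec a y"
  by (simp add: refl_vec_def inner_diff_left inner_diff_right inner_commute algebra_simps)

lemma refl_vec_invol: assumes "a \<noteq> 0" shows "refl_vec a (refl_vec a x) = x"
proof -
  have "a \<bullet> a \<noteq> 0" using assms by simp
  then show ?thesis
    by (simp add: refl_vec_def inner_diff_left algebra_simps scaleR_diff_left[symmetric]
        flip: scaleR_add_left)
qed

lemma refl_vec_self: assumes "a \<noteq> 0" shows "refl_vec a a = - a"
proof -
  have "a \<bullet> a \<noteq> 0" using assms by simp
  then show ?thesis by (simp add: refl_vec_def algebra_simps scaleR_2)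
qed

lemma refl_vec_hyp: "x \<in> hyp a \<Longrightarrow> refl_vec a x = x"
  by (simp add: refl_vec_def hyp_def)

lemma linear_refl_vec: "linear (refl_vec a)"
proof (rule linearI)
  fix x y :: 'a and c :: real
  show "refl_vec a (x + y) = refl_vec a x + refl_vec a y"
    by (simp add: refl_vec_def inner_add_left add_divide_distrib scaleR_add_left algebra_simps)
  have "2 * (c * (x \<bullet> a)) / (a \<bullet> a) = c * (2 * (x \<bullet> a) / (a \<bullet> a))" by simp
  then show "refl_vec a (c *\<^sub>R x) = c *\<^sub>R refl_vec a x"
    by (simp add: refl_vec_def scaleR_diff_right)
qed

lemma refl_vec_inner: assumes "a \<noteq> 0" shows "refl_vec a x \<bullet> refl_vec a y = x \<bullet> y"
  by (simp add: refl_vec_adj refl_vec_invol assms)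

lemma rs_refl: "root_system R \<Longrightarrow> a \<in> R \<Longrightarrow> b \<in> R \<Longrightarrow> refl_vec a b \<in> R"
  by (simp add: root_system_def)

lemma rs_nz: "root_system R \<Longrightarrow> a \<in> R \<Longrightarrow> a \<noteq> 0"
  by (auto simp: root_system_def)

lemma rs_finite: "root_system R \<Longrightarrow> finite R"
  by (simp add: root_system_def)

lemma rs_neg: "root_system R \<Longrightarrow> a \<in> R \<Longrightarrow> - a \<in> R"
  by (metis refl_vec_self rs_nz rs_refl)

lemma rs_reduced: assumes "root_system R" "a \<in> R" "c *\<^sub>R a \<in> R" shows "c = 1 \<or> c = -1"
proof -
  have h: "\<forall>a\<in>R. \<forall>c::real. c *\<^sub>R a \<in> R \<longrightarrow> c = 1 \<or> c = -1"
    using assms(1) unfolding root_system_def by (rule conjunct2[THEN conjunct2[THEN conjunct2]])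
  show ?thesis using h assms(2,3) by blast
qed

lemma rs_refl_image: assumes "root_system R" "a \<in> R" shows "refl_vec a ` R = R"
proof
  show "refl_vec a ` R \<subseteq> R" using rs_refl[OF assms] by auto
  show "R \<subseteq> refl_vec a ` R"
  proof
    fix b assume "b \<in> R"
    have "refl_vec a (refl_vec a b) = b" by (rule refl_vec_invol[OF rs_nz[OF assms]])
    moreover have "refl_vec a b \<in> R" by (rule rs_refl[OF assms \<open>b \<in> R\<close>])
    ultimately show "b \<in> refl_vec a ` R" by (metis image_eqI)
  qed
qed

lemma sub_rs: assumes "root_system \<Phi>" "root_subsystem \<Phi> \<Psi>" shows "root_system \<Psi>"
  using assms unfolding root_system_def root_subsystem_def
  by (meson finite_subset subsetD)

lemma hyp_neg[simp]: "hyp (- a) = hyp a"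
  by (auto simp: hyp_def)

definition cell :: "'a::euclidean_space set \<Rightarrow> 'a set \<Rightarrow> 'a set" where
  "cell R P = {x. \<forall>a\<in>R. (a \<in> P \<longrightarrow> x \<bullet> a > 0) \<and> (a \<notin> P \<longrightarrow> x \<bullet> a < 0)}"

lemma convex_cell: "convex (cell R P)"
unfolding convex_def
proof (intro ballI allI impI)
  fix x y u v assume xy: "x \<in> cell R P" "y \<in> cell R P" and uv: "(0::real) \<le> u" "0 \<le> v" "u + v = 1"
  have h: "u * p + v * q > 0" if "p > 0" "q > 0" for p q :: real
  proof (cases "u > 0")
    case True then show ?thesis using that uv by (simp add: add_pos_nonneg)
  next
    case False then show ?thesis using that uv by simp
  qed
  have h2: "u * p + v * q < 0" if "p < 0" "q < 0" for p q :: real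
    using h[of "-p" "-q"] that by simp
  show "u *\<^sub>R x + v *\<^sub>R y \<in> cell R P"
    using xy h h2 by (auto simp: cell_def inner_add_left)
qed

lemma cell_sub: "cell R P \<subseteq> UNIV - (\<Union>a\<in>R. hyp a)"
  by (force simp: cell_def hyp_def)

lemma ch_sign:
  assumes "C \<in> Ch R" "a \<in> R" "x \<in> C" "y \<in> C" "x \<bullet> a > 0"
  shows "y \<bullet> a > 0"
proof (rule ccontr)
  assume "\<not> y \<bullet> a > 0"
  then have "inner a y \<le> 0" "0 \<le> inner a x" using assms by (auto simp: inner_commute)
  moreover have "connected C" using assms(1) by (simp add: Ch_def in_components_connected)
  ultimately obtain z where "z \<in> C" "inner a z = 0"
    using connected_ivt_hyperplane[of C y x a 0] assms by auto
  moreover have "C \<subseteq> UNIV - (\<Union>a\<in>R. hyp a)" using assms(1) by (simp add: Ch_def in_components_subset)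
  ultimately show False using assms(2) by (auto simp: hyp_def inner_commute)
qed

lemma ch_nz: "C \<in> Ch R \<Longrightarrow> a \<in> R \<Longrightarrow> x \<in> C \<Longrightarrow> x \<bullet> a \<noteq> 0"
  using in_components_subset[of C] by (force simp: Ch_def hyp_def)

lemma ch_nonempty: "C \<in> Ch R \<Longrightarrow> C \<noteq> {}"
  by (simp add: Ch_def in_components_nonempty)

lemma ch_pos_iff:
  assumes "C \<in> Ch R" "a \<in> R" "x \<in> C"
  shows "a \<in> pos_roots R C \<longleftrightarrow> x \<bullet> a > 0"
proof
  assume "a \<in> pos_roots R C" then show "x \<bullet> a > 0" using assms(3) by (simp add: pos_roots_def)
next
  assume "x \<bullet> a > 0"
  then have "\<forall>e\<in>C. e \<bullet> a > 0" using ch_sign[OF assms(1,2,3)] by blast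
  then show "a \<in> pos_roots R C" using assms(2) by (simp add: pos_roots_def)
qed

lemma ch_cell: assumes "C \<in> Ch R" shows "C = cell R (pos_roots R C)"
proof
  show "C \<subseteq> cell R (pos_roots R C)"
  proof
    fix x assume x: "x \<in> C"
    have "(a \<in> pos_roots R C \<longrightarrow> x \<bullet> a > 0) \<and> (a \<notin> pos_roots R C \<longrightarrow> x \<bullet> a < 0)"
      if "a \<in> R" for a
    proof -
      have "x \<bullet> a \<noteq> 0" by (rule ch_nz[OF assms that x])
      then show ?thesis using ch_pos_iff[OF assms that x] by linarith
    qed
    then show "x \<in> cell R (pos_roots R C)" unfolding cell_def by blast
  qed
  then show "cell R (pos_roots R C) \<subseteq> C"
    using components_maximal[of C "UNIV - (\<Union>a\<in>R. hyp a)" "cell R (pos_roots R C)"]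
      assms convex_connected[OF convex_cell] cell_sub ch_nonempty
    by (metis Ch_def inf.absorb_iff1)
qed

lemma pos_roots_sub: "pos_roots R C \<subseteq> R" by (auto simp: pos_roots_def)

lemma pos_cell: assumes "cell R P \<noteq> {}" "P \<subseteq> R" shows "pos_roots R (cell R P) = P"
proof -
  obtain x where x: "x \<in> cell R P" using assms by auto
  show ?thesis
  proof (intro equalityI subsetI)
    fix a assume a: "a \<in> pos_roots R (cell R P)"
    then have "a \<in> R" "x \<bullet> a > 0" using x by (auto simp: pos_roots_def)
    then show "a \<in> P" using x by (auto simp: cell_def)
  next
    fix a assume "a \<in> P" then show "a \<in> pos_roots R (cell R P)"
      using assms by (auto simp: pos_roots_def cell_def)
  qed
qed

lemma cell_ch: assumes "cell R P \<noteq> {}" "P \<subseteq> R" shows "cell R P \<in> Ch R"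
proof -
  obtain x where x: "x \<in> cell R P" using assms by auto
  let ?S = "UNIV - (\<Union>a\<in>R. hyp a)"
  define C0 where "C0 = connected_component_set ?S x"
  have xS: "x \<in> ?S" using x cell_sub by blast
  have C0: "C0 \<in> Ch R" unfolding C0_def Ch_def using xS by (rule componentsI)
  have xC0: "x \<in> C0" unfolding C0_def using xS by simp
  have "pos_roots R C0 = P"
  proof (intro equalityI subsetI)
    fix a assume a: "a \<in> pos_roots R C0"
    then have "a \<in> R" "x \<bullet> a > 0" using xC0 by (auto simp: pos_roots_def)
    then show "a \<in> P" using x by (auto simp: cell_def)
  next
    fix a assume "a \<in> P"
    then have "a \<in> R" "x \<bullet> a > 0" using x assms by (auto simp: cell_def)
    then show "a \<in> pos_roots R C0" using ch_pos_iff[OF C0 _ xC0] by auto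
  qed
  then have "C0 = cell R P" using ch_cell[OF C0] by metis
  then show ?thesis using C0 by simp
qed

lemma chamber_eq: assumes "C1 \<in> Ch R" "C2 \<in> Ch R" "pos_roots R C1 = pos_roots R C2" shows "C1 = C2"
proof -
  have "C1 = cell R (pos_roots R C1)" by (rule ch_cell[OF assms(1)])
  also have "\<dots> = cell R (pos_roots R C2)" using assms(3) by (rule arg_cong)
  also have "\<dots> = C2" by (rule ch_cell[OF assms(2), symmetric])
  finally show ?thesis .
qed

lemma neg_pos:
  assumes "root_system R" "C \<in> Ch R" "a \<in> R"
  shows "- a \<in> pos_roots R C \<longleftrightarrow> a \<notin> pos_roots R C"
proof -
  obtain x where x: "x \<in> C" using ch_nonempty[OF assms(2)] by auto
  show ?thesis using ch_pos_iff[OF assms(2) _ x] rs_neg[OF assms(1,3)] assms(3) ch_nz[OF assms(2,3) x]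
    by auto
qed

lemma closure_pos: assumes "C \<in> Ch R" "a \<in> pos_roots R C" "y \<in> closure C" shows "y \<bullet> a \<ge> 0"
proof -
  have "C \<subseteq> {y. inner a y \<ge> 0}" using assms(2) by (auto simp: pos_roots_def inner_commute less_imp_le)
  then have "closure C \<subseteq> {y. inner a y \<ge> 0}" by (intro closure_minimal closed_halfspace_ge)
  then show ?thesis using assms(3) by (auto simp: inner_commute)
qed

lemma closure_neg: assumes "C \<in> Ch R" "a \<in> R" "a \<notin> pos_roots R C" "y \<in> closure C" shows "y \<bullet> a \<le> 0"
proof -
  have "C \<subseteq> {y. inner a y \<le> 0}" using assms ch_pos_iff[OF assms(1,2)] by (auto simp: inner_commute not_less)
  then have "closure C \<subseteq> {y. inner a y \<le> 0}" by (intro closure_minimal closed_halfspace_le)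
  then show ?thesis using assms(4) by (auto simp: inner_commute)
qed



definition nnc :: "'a::euclidean_space set \<Rightarrow> 'a \<Rightarrow> bool" where
  "nnc S y \<longleftrightarrow> (\<exists>c. (\<forall>g\<in>S. c g \<ge> 0) \<and> y = (\<Sum>g\<in>S. c g *\<^sub>R g))"

lemma nnc_elem: assumes "finite S" "s \<in> S" shows "nnc S s"
proof -
  have "(\<Sum>g\<in>S. (if g = s then 1 else 0) *\<^sub>R g) = s"
    using assms by (simp add: if_distrib[of "\<lambda>c. c *\<^sub>R _"] sum.delta' cong: if_cong)
  then show ?thesis unfolding nnc_def
    by (intro exI[of _ "\<lambda>g. if g = s then 1 else 0"]) auto
qed

lemma nnc_add: assumes "nnc S x" "nnc S y" shows "nnc S (x + y)"
proof -
  obtain c d where c: "\<forall>g\<in>S. c g \<ge> 0" "x = (\<Sum>g\<in>S. c g *\<^sub>R g)"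
    and d: "\<forall>g\<in>S. d g \<ge> 0" "y = (\<Sum>g\<in>S. d g *\<^sub>R g)" using assms by (auto simp: nnc_def)
  then have "x + y = (\<Sum>g\<in>S. (c g + d g) *\<^sub>R g)" by (simp add: sum.distrib scaleR_add_left)
  then show ?thesis unfolding nnc_def using c d by (intro exI[of _ "\<lambda>g. c g + d g"]) auto
qed

lemma nnc_scale: assumes "nnc S x" "t \<ge> 0" shows "nnc S (t *\<^sub>R x)"
proof -
  obtain c where c: "\<forall>g\<in>S. c g \<ge> 0" "x = (\<Sum>g\<in>S. c g *\<^sub>R g)" using assms by (auto simp: nnc_def)
  then have "t *\<^sub>R x = (\<Sum>g\<in>S. (t * c g) *\<^sub>R g)" by (simp add: scaleR_sum_right)
  then show ?thesis unfolding nnc_def using c assms(2) by (intro exI[of _ "\<lambda>g. t * c g"]) auto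
qed

lemma nnc_trans:
  assumes "\<forall>t\<in>T. nnc S t" "nnc T y"
  shows "nnc S y"
proof -
  obtain d where d: "\<forall>t\<in>T. d t \<ge> 0" "y = (\<Sum>t\<in>T. d t *\<^sub>R t)" using assms(2) by (auto simp: nnc_def)
  obtain c where c: "\<forall>t\<in>T. (\<forall>g\<in>S. c t g \<ge> 0) \<and> t = (\<Sum>g\<in>S. c t g *\<^sub>R g)"
    using assms(1) unfolding nnc_def by metis
  have "y = (\<Sum>t\<in>T. d t *\<^sub>R (\<Sum>g\<in>S. c t g *\<^sub>R g))"
    unfolding d(2) using c by (intro sum.cong) auto
  also have "\<dots> = (\<Sum>t\<in>T. \<Sum>g\<in>S. (d t * c t g) *\<^sub>R g)" by (simp add: scaleR_sum_right)
  also have "\<dots> = (\<Sum>g\<in>S. \<Sum>t\<in>T. (d t * c t g) *\<^sub>R g)" by (rule sum.swap)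
  also have "\<dots> = (\<Sum>g\<in>S. (\<Sum>t\<in>T. d t * c t g) *\<^sub>R g)" by (simp add: scaleR_sum_left)
  finally show ?thesis unfolding nnc_def using c d
    by (intro exI[of _ "\<lambda>g. \<Sum>t\<in>T. d t * c t g"]) (auto intro!: sum_nonneg)
qed

lemma nnc_inner_nonneg:
  assumes "\<forall>g\<in>S. x \<bullet> g > 0" "nnc S y" shows "x \<bullet> y \<ge> 0"
proof -
  obtain c where c: "\<forall>g\<in>S. c g \<ge> 0" "y = (\<Sum>g\<in>S. c g *\<^sub>R g)" using assms by (auto simp: nnc_def)
  then have "x \<bullet> y = (\<Sum>g\<in>S. c g * (x \<bullet> g))" by (simp add: inner_sum_right)
  also have "\<dots> \<ge> 0" using c assms by (intro sum_nonneg) (simp add: less_imp_le)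
  finally show ?thesis .
qed

lemma nnc_inner_pos:
  assumes "finite S" "\<forall>g\<in>S. x \<bullet> g > 0" "nnc S y" "y \<noteq> 0" shows "x \<bullet> y > 0"
proof -
  obtain c where c: "\<forall>g\<in>S. c g \<ge> 0" "y = (\<Sum>g\<in>S. c g *\<^sub>R g)" using assms by (auto simp: nnc_def)
  obtain g where g: "g \<in> S" "c g \<noteq> 0"
  proof (rule ccontr)
    assume "\<not> thesis"
    then have "\<forall>g\<in>S. c g = 0" using that by blast
    then have "y = 0" using c by simp
    then show False using assms by simp
  qed
  have "x \<bullet> y = (\<Sum>g\<in>S. c g * (x \<bullet> g))" using c by (simp add: inner_sum_right)
  also have "\<dots> > 0"
    using c assms g by (intro sum_pos2[OF assms(1) g(1)]) (auto simp: less_imp_le less_le)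
  finally show ?thesis .
qed

definition obtuse :: "'a::euclidean_space set \<Rightarrow> bool" where
  "obtuse S \<longleftrightarrow> (\<forall>a\<in>S. \<forall>b\<in>S. a \<noteq> b \<longrightarrow> a \<bullet> b \<le> 0)"

lemma obtuse_independent:
  assumes "finite S" "\<forall>g\<in>S. x \<bullet> g > 0" "obtuse S"
  shows "independent S"
proof -
  have "\<forall>v\<in>S. u v = 0" if u: "(\<Sum>v\<in>S. u v *\<^sub>R v) = 0" for u
  proof -
    define p where "p v = max (u v) 0" for v
    define q where "q v = max (- u v) 0" for v
    have upq: "u v = p v - q v" for v by (simp add: p_def q_def max_def)
    have pq0: "p v * q v = 0" for v by (simp add: p_def q_def max_def)
    have p0: "p v \<ge> 0" "q v \<ge> 0" for v by (auto simp: p_def q_def)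
    define w where "w = (\<Sum>v\<in>S. p v *\<^sub>R v)"
    have wq: "w = (\<Sum>v\<in>S. q v *\<^sub>R v)"
    proof -
      have "0 = (\<Sum>v\<in>S. p v *\<^sub>R v - q v *\<^sub>R v)" using u by (simp add: upq scaleR_diff_left)
      then show ?thesis unfolding w_def by (simp add: sum_subtractf)
    qed
    have "w \<bullet> w = (\<Sum>a\<in>S. p a *\<^sub>R a) \<bullet> (\<Sum>b\<in>S. q b *\<^sub>R b)"
      using wq w_def by metis
    also have "\<dots> = (\<Sum>b\<in>S. \<Sum>a\<in>S. (p a * q b) * (a \<bullet> b))"
      by (simp add: inner_sum_left inner_sum_right sum_distrib_left algebra_simps)
    also have "\<dots> \<le> 0"
    proof (intro sum_nonpos)
      fix b a assume ab: "a \<in> S" "b \<in> S"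
      show "(p a * q b) * (a \<bullet> b) \<le> 0"
      proof (cases "a = b")
        case True
        have "p a * q b = 0" using pq0[of b] True by simp
        then show ?thesis by auto
      next
        case False
        then have "a \<bullet> b \<le> 0" using assms(3) ab by (auto simp: obtuse_def)
        moreover have "p a * q b \<ge> 0" using p0 by simp
        ultimately show ?thesis by (simp add: mult_nonneg_nonpos)
      qed
    qed
    finally have "w = 0" by (metis inner_gt_zero_iff not_le)
    have allz: "\<forall>v\<in>S. r v = 0" if r0: "\<forall>v. r v \<ge> 0" and rw: "(\<Sum>v\<in>S. r v *\<^sub>R v) = 0" for r
    proof -
      have "0 = x \<bullet> (\<Sum>v\<in>S. r v *\<^sub>R v)" using rw by simp
      also have "\<dots> = (\<Sum>v\<in>S. r v * (x \<bullet> v))" by (simp add: inner_sum_right)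
      finally have "(\<Sum>v\<in>S. r v * (x \<bullet> v)) = 0" by simp
      then have "\<forall>v\<in>S. r v * (x \<bullet> v) = 0"
        using sum_nonneg_eq_0_iff[OF assms(1), of "\<lambda>v. r v * (x \<bullet> v)"] r0 assms(2)
        by (simp add: less_imp_le)
      then show ?thesis using assms(2) by (metis less_irrefl mult_eq_0_iff)
    qed
    have "\<forall>v\<in>S. p v = 0" by (rule allz) (use p0 \<open>w = 0\<close> w_def in auto)
    moreover have "\<forall>v\<in>S. q v = 0" by (rule allz) (use p0 \<open>w = 0\<close> wq in auto)
    ultimately show ?thesis by (simp add: upq)
  qed
  then show ?thesis using assms(1) by (auto simp: independent_explicit)
qed



lemma key_step:
  assumes fin: "finite S" and pos: "\<forall>g\<in>S. x0 \<bullet> g > 0" and dS: "d \<in> S" and eS: "e \<in> S"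
    and ed: "e \<noteq> d" and t: "t > 0" and s: "s > 0" and c: "\<forall>g\<in>S. c g \<ge> 0"
    and eq: "t *\<^sub>R d = s *\<^sub>R e + (\<Sum>g\<in>S. c g *\<^sub>R g)"
  shows "nnc (S - {d}) d"
proof -
  define v where "v = s *\<^sub>R e + (\<Sum>g\<in>S - {d}. c g *\<^sub>R g)"
  have sumS: "(\<Sum>g\<in>S. c g *\<^sub>R g) = c d *\<^sub>R d + (\<Sum>g\<in>S - {d}. c g *\<^sub>R g)"
    using fin dS by (simp add: sum.remove)
  have v: "(t - c d) *\<^sub>R d = v" using eq sumS unfolding v_def by (simp add: scaleR_diff_left algebra_simps)
  have finD: "finite (S - {d})" using fin by simp
  have eD: "e \<in> S - {d}" using eS ed by simp
  have nv: "nnc (S - {d}) v" unfolding v_def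
  proof (rule nnc_add)
    show "nnc (S - {d}) (s *\<^sub>R e)" using nnc_elem[OF finD eD] s by (intro nnc_scale) auto
    show "nnc (S - {d}) (\<Sum>g\<in>S - {d}. c g *\<^sub>R g)" unfolding nnc_def using c by auto
  qed
  have posD: "\<forall>g\<in>S - {d}. x0 \<bullet> g > 0" using pos by auto
  have "x0 \<bullet> v \<ge> s * (x0 \<bullet> e)"
  proof -
    have "x0 \<bullet> (\<Sum>g\<in>S - {d}. c g *\<^sub>R g) \<ge> 0"
      using nnc_inner_nonneg[OF posD] c unfolding nnc_def by auto
    then show ?thesis unfolding v_def by (simp add: inner_add_right)
  qed
  moreover have "s * (x0 \<bullet> e) > 0" using s pos eS by simp
  ultimately have xv: "x0 \<bullet> v > 0" by linarith
  show ?thesis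
  proof (cases "t - c d > 0")
    case True
    then have "d = (1 / (t - c d)) *\<^sub>R v" by (simp flip: v)
    then show ?thesis using nnc_scale[OF nv, of "1 / (t - c d)"] True by simp
  next
    case False
    have "x0 \<bullet> v = (t - c d) * (x0 \<bullet> d)" using v by (metis inner_scaleR_right)
    also have "\<dots> \<le> 0" using False pos dS by (simp add: mult_nonpos_nonneg less_imp_le)
    finally show ?thesis using xv by simp
  qed
qed

lemma ch_point: "C \<in> Ch R \<Longrightarrow> \<exists>x. x \<in> C" using ch_nonempty by blast

lemma obtuse_min:
  assumes R: "root_system R" and C: "C \<in> Ch R" and SP: "S \<subseteq> pos_roots R C" and fin: "finite S"
    and span: "\<forall>a\<in>pos_roots R C. nnc S a" and mini: "\<forall>b\<in>S. \<not> nnc (S - {b}) b"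
  shows "obtuse S"
  unfolding obtuse_def
proof (intro ballI impI)
  fix a b assume a: "a \<in> S" and b: "b \<in> S" and ab: "a \<noteq> b"
  obtain x0 where x0: "x0 \<in> C" using ch_point[OF C] by blast
  have pos: "\<forall>g\<in>S. x0 \<bullet> g > 0" using SP x0 by (auto simp: pos_roots_def)
  have aR: "a \<in> R" and bR: "b \<in> R" using a b SP pos_roots_sub by blast+
  show "a \<bullet> b \<le> 0"
  proof (rule ccontr)
    assume "\<not> a \<bullet> b \<le> 0"
    then have abp: "a \<bullet> b > 0" by simp
    have "a \<noteq> 0" using rs_nz[OF R aR] .
    then have aa: "a \<bullet> a > 0" by simp
    define k where "k = 2 * (b \<bullet> a) / (a \<bullet> a)"
    have k: "k > 0" unfolding k_def using abp aa by (simp add: inner_commute)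
    define r where "r = refl_vec a b"
    have r: "r = b - k *\<^sub>R a" unfolding r_def k_def refl_vec_def ..
    have rR: "r \<in> R" unfolding r_def using rs_refl[OF R aR bR] .
    show False
    proof (cases "r \<in> pos_roots R C")
      case True
      then obtain c where c: "\<forall>g\<in>S. c g \<ge> 0" "r = (\<Sum>g\<in>S. c g *\<^sub>R g)" using span by (auto simp: nnc_def)
      have "1 *\<^sub>R b = k *\<^sub>R a + (\<Sum>g\<in>S. c g *\<^sub>R g)" using c(2) r by (simp add: algebra_simps)
      then have "nnc (S - {b}) b" by (rule key_step[OF fin pos b a ab zero_less_one k c(1)])
      then show False using mini b by blast
    next
      case False
      then have "- r \<in> pos_roots R C" using neg_pos[OF R C rR] by simp
      then obtain c where c: "\<forall>g\<in>S. c g \<ge> 0" "- r = (\<Sum>g\<in>S. c g *\<^sub>R g)" using span by (auto simp: nnc_def)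
      have "k *\<^sub>R a = 1 *\<^sub>R b + (\<Sum>g\<in>S. c g *\<^sub>R g)" using c(2) r by (simp add: algebra_simps)
      then have "nnc (S - {a}) a" by (rule key_step[OF fin pos a b ab[symmetric] k zero_less_one c(1)])
      then show False using mini a by blast
    qed
  qed
qed

lemma simple_exists:
  assumes R: "root_system R" and C: "C \<in> Ch R"
  shows "\<exists>S. simple_system R S \<and> S \<subseteq> pos_roots R C \<and> obtuse S"
proof -
  let ?P = "pos_roots R C"
  define Fam where "Fam S \<longleftrightarrow> S \<subseteq> ?P \<and> (\<forall>a\<in>?P. nnc S a)" for S
  have finP: "finite ?P" using rs_finite[OF R] pos_roots_sub finite_subset by blast
  have "Fam ?P" unfolding Fam_def using nnc_elem[OF finP] by blast
  then obtain S where S: "Fam S" and least: "\<And>T. Fam T \<Longrightarrow> card S \<le> card T"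
    using ex_has_least_nat[of Fam ?P card] by blast
  have SP: "S \<subseteq> ?P" and span: "\<forall>a\<in>?P. nnc S a" using S by (auto simp: Fam_def)
  have fin: "finite S" using finP SP finite_subset by blast
  have mini: "\<forall>b\<in>S. \<not> nnc (S - {b}) b"
  proof (intro ballI notI)
    fix b assume b: "b \<in> S" and nb: "nnc (S - {b}) b"
    have "\<forall>s\<in>S. nnc (S - {b}) s"
    proof
      fix s assume s: "s \<in> S"
      show "nnc (S - {b}) s"
      proof (cases "s = b")
        case True then show ?thesis using nb by simp
      next
        case False then show ?thesis using nnc_elem[of "S - {b}" s] fin s by simp
      qed
    qed
    then have "Fam (S - {b})" unfolding Fam_def using SP span nnc_trans by blast
    then have "card S \<le> card (S - {b})" by (rule least)
    moreover have "card (S - {b}) < card S" using fin b by (rule card_Diff1_less)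
    ultimately show False by simp
  qed
  have ob: "obtuse S" by (rule obtuse_min[OF R C SP fin span mini])
  obtain x0 where x0: "x0 \<in> C" using ch_point[OF C] by blast
  have pos: "\<forall>g\<in>S. x0 \<bullet> g > 0" using SP x0 by (auto simp: pos_roots_def)
  have ind: "independent S" by (rule obtuse_independent[OF fin pos ob])
  have "simple_system R S"
    unfolding simple_system_def
  proof (intro conjI ballI)
    show "S \<subseteq> R" using SP pos_roots_sub by blast
    show "finite S" by (rule fin)
    show "independent S" by (rule ind)
    fix a assume aR: "a \<in> R"
    show "\<exists>c. a = (\<Sum>b\<in>S. c b *\<^sub>R b) \<and> ((\<forall>b\<in>S. 0 \<le> c b) \<or> (\<forall>b\<in>S. c b \<le> 0))"
    proof (cases "a \<in> ?P")
      case True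
      then show ?thesis using span by (auto simp: nnc_def)
    next
      case False
      then have "- a \<in> ?P" using neg_pos[OF R C aR] by simp
      then obtain c where c: "\<forall>g\<in>S. c g \<ge> 0" "- a = (\<Sum>g\<in>S. c g *\<^sub>R g)" using span by (auto simp: nnc_def)
      then have "a = (\<Sum>g\<in>S. (- c g) *\<^sub>R g)" by (simp add: sum_negf flip: c(2))
      then show ?thesis using c(1) by (intro exI[of _ "\<lambda>g. - c g"]) auto
    qed
  qed
  then show ?thesis using SP ob by blast
qed

lemma simple_nnc:
  assumes C: "C \<in> Ch R" and S: "simple_system R S" "S \<subseteq> pos_roots R C" and a: "a \<in> pos_roots R C"
  shows "nnc S a"
proof -
  have aR: "a \<in> R" using a by (simp add: pos_roots_def)
  obtain c where c: "a = (\<Sum>b\<in>S. c b *\<^sub>R b)" "(\<forall>b\<in>S. 0 \<le> c b) \<or> (\<forall>b\<in>S. c b \<le> 0)"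
    using S(1) aR unfolding simple_system_def by blast
  show ?thesis
  proof (cases "\<forall>b\<in>S. 0 \<le> c b")
    case True then show ?thesis using c by (auto simp: nnc_def)
  next
    case False
    then have cn: "\<forall>b\<in>S. c b \<le> 0" using c by blast
    obtain x0 where x0: "x0 \<in> C" using ch_point[OF C] by blast
    have "x0 \<bullet> a = (\<Sum>b\<in>S. c b * (x0 \<bullet> b))" using c(1) by (simp add: inner_sum_right)
    also have "\<dots> \<le> 0"
    proof (intro sum_nonpos)
      fix b assume b: "b \<in> S"
      then have "c b \<le> 0" "x0 \<bullet> b > 0" using cn S(2) x0 by (auto simp: pos_roots_def)
      then show "c b * (x0 \<bullet> b) \<le> 0" by (simp add: mult_nonpos_nonneg)
    qed
    finally show ?thesis using a x0 by (auto simp: pos_roots_def)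
  qed
qed

lemma delta_sum: "finite S \<Longrightarrow> a \<in> S \<Longrightarrow> (\<Sum>g\<in>S. (if g = a then 1 else 0) *\<^sub>R g) = (a::'a::real_vector)"
  by (simp add: if_distrib[of "\<lambda>c. c *\<^sub>R _"] sum.delta' cong: if_cong)

lemma simple_unique_sub:
  assumes R: "root_system R" and C: "C \<in> Ch R"
    and S1: "simple_system R S1" "S1 \<subseteq> pos_roots R C"
    and S2: "simple_system R S2" "S2 \<subseteq> pos_roots R C"
  shows "S1 \<subseteq> S2"
proof
  fix a assume aS1: "a \<in> S1"
  have fin1: "finite S1" and fin2: "finite S2" and ind1: "independent S1"
    using S1 S2 by (auto simp: simple_system_def)
  have "nnc S2 a" using simple_nnc[OF C S2] aS1 S1(2) by blast
  then obtain c where c: "\<forall>b\<in>S2. c b \<ge> 0" "a = (\<Sum>b\<in>S2. c b *\<^sub>R b)" by (auto simp: nnc_def)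
  have "\<forall>b\<in>S2. nnc S1 b" using simple_nnc[OF C S1] S2(2) by blast
  then obtain d where d: "\<forall>b\<in>S2. (\<forall>g\<in>S1. d b g \<ge> 0) \<and> b = (\<Sum>g\<in>S1. d b g *\<^sub>R g)"
    unfolding nnc_def by metis
  define e where "e g = (\<Sum>b\<in>S2. c b * d b g)" for g
  have "a = (\<Sum>b\<in>S2. c b *\<^sub>R (\<Sum>g\<in>S1. d b g *\<^sub>R g))"
    unfolding c(2) using d by (intro sum.cong) auto
  also have "\<dots> = (\<Sum>b\<in>S2. \<Sum>g\<in>S1. (c b * d b g) *\<^sub>R g)" by (simp add: scaleR_sum_right)
  also have "\<dots> = (\<Sum>g\<in>S1. \<Sum>b\<in>S2. (c b * d b g) *\<^sub>R g)" by (rule sum.swap)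
  also have "\<dots> = (\<Sum>g\<in>S1. e g *\<^sub>R g)" by (simp add: scaleR_sum_left e_def)
  finally have ae: "a = (\<Sum>g\<in>S1. e g *\<^sub>R g)" .
  have "(\<Sum>g\<in>S1. (e g - (if g = a then 1 else 0)) *\<^sub>R g)
      = (\<Sum>g\<in>S1. e g *\<^sub>R g) - (\<Sum>g\<in>S1. (if g = a then 1 else 0) *\<^sub>R g)"
    by (simp only: scaleR_diff_left sum_subtractf)
  also have "\<dots> = 0" unfolding delta_sum[OF fin1 aS1] ae[symmetric] by simp
  finally have z: "(\<Sum>g\<in>S1. (e g - (if g = a then 1 else 0)) *\<^sub>R g) = 0" .
  have h: "\<And>u. (\<Sum>v\<in>S1. u v *\<^sub>R v) = 0 \<Longrightarrow> \<forall>v\<in>S1. u v = 0"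
    using ind1 unfolding independent_explicit by blast
  have "\<forall>g\<in>S1. e g - (if g = a then 1 else 0) = 0" by (rule h[OF z])
  then have eq: "\<forall>g\<in>S1. e g = (if g = a then 1 else 0)" by simp
  have nn: "\<forall>b\<in>S2. \<forall>g\<in>S1. c b * d b g \<ge> 0" using c d by auto
  obtain b where b: "b \<in> S2" "c b * d b a > 0"
  proof (rule ccontr)
    assume "\<not> thesis"
    then have "\<forall>b\<in>S2. c b * d b a \<le> 0" using that by (meson not_le)
    then have "e a \<le> 0" unfolding e_def by (intro sum_nonpos) auto
    then show False using eq aS1 by simp
  qed
  have "c b \<ge> 0" "d b a \<ge> 0" using c d b(1) aS1 by auto
  then have cb: "c b > 0" and dba: "d b a > 0"
    using b(2) by (auto simp: zero_less_mult_iff)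
  have dz: "d b g = 0" if g: "g \<in> S1" "g \<noteq> a" for g
  proof -
    have "e g = 0" using eq g by simp
    then have "(\<Sum>b'\<in>S2. c b' * d b' g) = 0" by (simp add: e_def)
    moreover have "\<forall>b'\<in>S2. c b' * d b' g \<ge> 0" using nn g by blast
    ultimately have "\<forall>b'\<in>S2. c b' * d b' g = 0"
      using sum_nonneg_eq_0_iff[OF fin2, of "\<lambda>b'. c b' * d b' g"] by simp
    then show ?thesis using b(1) cb by force
  qed
  have "b = (\<Sum>g\<in>S1. d b g *\<^sub>R g)" using d b(1) by blast
  also have "\<dots> = d b a *\<^sub>R a + (\<Sum>g\<in>S1 - {a}. d b g *\<^sub>R g)" using fin1 aS1 by (simp add: sum.remove)
  also have "(\<Sum>g\<in>S1 - {a}. d b g *\<^sub>R g) = 0" using dz by (intro sum.neutral) auto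
  finally have bda: "b = d b a *\<^sub>R a" by simp
  have aR: "a \<in> R" using aS1 S1 by (auto simp: simple_system_def)
  have bR: "b \<in> R" using b(1) S2 by (auto simp: simple_system_def)
  have "d b a = 1 \<or> d b a = -1" using rs_reduced[OF R aR] bR bda by simp
  then have "d b a = 1" using dba by auto
  then have "b = a" using bda by simp
  then show "a \<in> S2" using b(1) by simp
qed

lemma simple_roots_eq:
  assumes R: "root_system R" and C: "C \<in> Ch R" and S: "simple_system R S" "S \<subseteq> pos_roots R C"
  shows "simple_roots R C = S"
  unfolding simple_roots_def
proof (rule the_equality)
  show "simple_system R S \<and> S \<subseteq> pos_roots R C" using S by simp
  fix T assume "simple_system R T \<and> T \<subseteq> pos_roots R C"
  then show "T = S" using simple_unique_sub[OF R C] S by blast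
qed

lemma simple_roots_props:
  assumes R: "root_system R" and C: "C \<in> Ch R"
  shows "simple_system R (simple_roots R C)" "simple_roots R C \<subseteq> pos_roots R C"
    "obtuse (simple_roots R C)"
proof -
  obtain S where S: "simple_system R S" "S \<subseteq> pos_roots R C" "obtuse S"
    using simple_exists[OF R C] by blast
  have "simple_roots R C = S" by (rule simple_roots_eq[OF R C S(1,2)])
  then show "simple_system R (simple_roots R C)" "simple_roots R C \<subseteq> pos_roots R C"
    "obtuse (simple_roots R C)" using S by simp_all
qed



definition wall :: "'a::euclidean_space set \<Rightarrow> 'a \<Rightarrow> bool" where
  "wall C a \<longleftrightarrow> (\<exists>U. openin (top_of_set (hyp a)) U \<and> U \<noteq> {} \<and> U \<subseteq> closure C \<inter> hyp a)"

lemma wall_neg: "wall C (- a) = wall C a" by (simp add: wall_def)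

lemma hyp_open_sub:
  assumes U: "openin (top_of_set (hyp a)) U" "U \<noteq> {}" "U \<subseteq> hyp g"
  shows "hyp a \<subseteq> hyp g"
proof
  obtain u where u: "u \<in> U" using U by auto
  obtain e where e: "e > 0" "\<forall>x'\<in>hyp a. dist x' u < e \<longrightarrow> x' \<in> U"
    using U(1) u unfolding openin_euclidean_subtopology_iff by blast
  have uh: "u \<in> hyp a" "u \<in> hyp g" using U u openin_imp_subset by blast+
  fix w assume w: "w \<in> hyp a"
  show "w \<in> hyp g"
  proof (cases "w = 0")
    case True then show ?thesis by (simp add: hyp_def)
  next
    case False
    define t where "t = e / (2 * norm w)"
    have t: "t > 0" using e False by (simp add: t_def)
    have "u + t *\<^sub>R w \<in> hyp a" using uh w by (simp add: hyp_def inner_add_left)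
    moreover have "dist (u + t *\<^sub>R w) u < e"
      using t e False by (simp add: dist_norm t_def)
    ultimately have "u + t *\<^sub>R w \<in> U" using e by blast
    then have "(u + t *\<^sub>R w) \<bullet> g = 0" using U(3) by (auto simp: hyp_def)
    then have "t * (w \<bullet> g) = 0" using uh by (simp add: hyp_def inner_add_left)
    then show ?thesis using t by (simp add: hyp_def)
  qed
qed

lemma hyp_sub_parallel:
  assumes "a \<noteq> 0" "hyp a \<subseteq> hyp g"
  shows "g = (g \<bullet> a / (a \<bullet> a)) *\<^sub>R a"
proof -
  define v where "v = g - (g \<bullet> a / (a \<bullet> a)) *\<^sub>R a"
  have aa: "a \<bullet> a \<noteq> 0" using assms by simp
  have va: "v \<bullet> a = 0" using aa by (simp add: v_def inner_diff_left)
  then have "v \<in> hyp g" using assms by (auto simp: hyp_def)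
  then have vg: "v \<bullet> g = 0" by (simp add: hyp_def)
  have "v \<bullet> v = v \<bullet> g - (g \<bullet> a / (a \<bullet> a)) * (v \<bullet> a)"
    by (simp add: v_def inner_diff_right)
  then have "v \<bullet> v = 0" using va vg by simp
  then have "v = 0" by simp
  then show ?thesis by (simp add: v_def)
qed

lemma parallel_root:
  assumes R: "root_system R" and a: "a \<in> R" and g: "g \<in> R" and h: "hyp a \<subseteq> hyp g"
  shows "g = a \<or> g = - a"
proof -
  define k where "k = g \<bullet> a / (a \<bullet> a)"
  have gk: "g = k *\<^sub>R a" unfolding k_def by (rule hyp_sub_parallel[OF rs_nz[OF R a] h])
  then have "k = 1 \<or> k = -1" using rs_reduced[OF R a] g by metis
  then show ?thesis using gk by (metis scaleR_minus1_left scaleR_one)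
qed

lemma wall_simple_pos:
  assumes R: "root_system R" and C: "C \<in> Ch R" and a: "a \<in> pos_roots R C" and w: "wall C a"
  shows "a \<in> simple_roots R C"
proof -
  let ?S = "simple_roots R C"
  have S: "simple_system R ?S" "?S \<subseteq> pos_roots R C" using simple_roots_props[OF R C] by auto
  have aR: "a \<in> R" using a pos_roots_sub by blast
  have fin: "finite ?S" using S by (simp add: simple_system_def)
  obtain c where c: "\<forall>g\<in>?S. c g \<ge> 0" "a = (\<Sum>g\<in>?S. c g *\<^sub>R g)"
    using simple_nnc[OF C S a] by (auto simp: nnc_def)
  obtain g where g: "g \<in> ?S" "c g \<noteq> 0"
  proof (rule ccontr)
    assume "\<not> thesis"
    then have "\<forall>g\<in>?S. c g = 0" using that by blast
    then have "a = 0" using c by simp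
    then show False using rs_nz[OF R aR] by simp
  qed
  have cg: "c g > 0" using g c by force
  obtain U where U: "openin (top_of_set (hyp a)) U" "U \<noteq> {}" "U \<subseteq> closure C \<inter> hyp a"
    using w by (auto simp: wall_def)
  have "U \<subseteq> hyp g"
  proof
    fix y assume y: "y \<in> U"
    then have yc: "y \<in> closure C" and ya: "y \<bullet> a = 0" using U by (auto simp: hyp_def)
    have nn: "\<forall>h\<in>?S. c h * (y \<bullet> h) \<ge> 0" using closure_pos[OF C _ yc] S(2) c(1) by auto
    have "y \<bullet> a = (\<Sum>h\<in>?S. c h * (y \<bullet> h))" by (subst c(2)) (simp add: inner_sum_right)
    then have "(\<Sum>h\<in>?S. c h * (y \<bullet> h)) = 0" using ya by simp
    then have "\<forall>h\<in>?S. c h * (y \<bullet> h) = 0"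
      using sum_nonneg_eq_0_iff[OF fin, of "\<lambda>h. c h * (y \<bullet> h)"] nn by simp
    then have "c g * (y \<bullet> g) = 0" using g by blast
    then show "y \<in> hyp g" using cg by (simp add: hyp_def)
  qed
  then have "hyp a \<subseteq> hyp g" using hyp_open_sub U by blast
  moreover have gR: "g \<in> R" using g S(2) pos_roots_sub by blast
  ultimately have "g = a \<or> g = - a" using parallel_root[OF R aR] by blast
  moreover have "- a \<notin> pos_roots R C" using neg_pos[OF R C aR] a by simp
  ultimately have "g = a" using g S(2) by auto
  then show ?thesis using g by simp
qed

lemma wall_simple:
  assumes R: "root_system R" and C: "C \<in> Ch R" and a: "a \<in> R" and w: "wall C a"
  shows "a \<in> simple_roots R C \<or> - a \<in> simple_roots R C"
proof (cases "a \<in> pos_roots R C")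
  case True then show ?thesis using wall_simple_pos[OF R C _ w] by simp
next
  case False
  then have "- a \<in> pos_roots R C" using neg_pos[OF R C a] by simp
  then show ?thesis using wall_simple_pos[OF R C _] w wall_neg by metis
qed

lemma nnc_inner_nonneg':
  assumes "\<forall>g\<in>S. x \<bullet> g \<ge> 0" "nnc S y" shows "x \<bullet> y \<ge> 0"
proof -
  obtain c where c: "\<forall>g\<in>S. c g \<ge> 0" "y = (\<Sum>g\<in>S. c g *\<^sub>R g)" using assms by (auto simp: nnc_def)
  then have "x \<bullet> y = (\<Sum>g\<in>S. c g * (x \<bullet> g))" by (simp add: inner_sum_right)
  also have "\<dots> \<ge> 0" using c assms by (intro sum_nonneg) simp
  finally show ?thesis .
qed

lemma simple_wall:
  assumes R: "root_system R" and C: "C \<in> Ch R" and aS: "a \<in> simple_roots R C"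
  shows "wall C a"
proof -
  let ?S = "simple_roots R C"
  let ?P = "pos_roots R C"
  have S: "simple_system R ?S" "?S \<subseteq> ?P" "obtuse ?S" using simple_roots_props[OF R C] by auto
  have fin: "finite ?S" using S by (simp add: simple_system_def)
  have aP: "a \<in> ?P" using aS S by blast
  have aR: "a \<in> R" using aP pos_roots_sub by blast
  have aa: "a \<bullet> a > 0" using rs_nz[OF R aR] by simp
  obtain x0 where x0: "x0 \<in> C" using ch_point[OF C] by blast
  have x0pos: "\<forall>g\<in>?P. x0 \<bullet> g > 0" using x0 by (auto simp: pos_roots_def)
  define k where "k = x0 \<bullet> a / (a \<bullet> a)"
  have k: "k > 0" using x0pos aP aa by (simp add: k_def)
  define y0 where "y0 = x0 - k *\<^sub>R a"
  define V where "V = (\<Inter>d\<in>?S - {a}. {z. inner d z > 0})"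
  define U where "U = hyp a \<inter> V"
  have "open V" unfolding V_def using fin by (intro open_INT) (auto intro: open_halfspace_gt)
  then have Uo: "openin (top_of_set (hyp a)) U" unfolding U_def by (rule openin_open_Int)
  have "y0 \<in> hyp a" using aa by (simp add: hyp_def y0_def k_def inner_diff_left)
  moreover have "y0 \<in> V"
  proof -
    have "d \<bullet> y0 > 0" if d: "d \<in> ?S - {a}" for d
    proof -
      have "a \<bullet> d \<le> 0" using S(3) d aS by (auto simp: obtuse_def)
      then have "k * (a \<bullet> d) \<le> 0" using k by (simp add: mult_nonneg_nonpos less_imp_le)
      moreover have "x0 \<bullet> d > 0" using x0pos d S(2) by blast
      ultimately show ?thesis by (simp add: y0_def inner_diff_right inner_commute)
    qed
    then show ?thesis unfolding V_def by blast
  qed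
  ultimately have "U \<noteq> {}" unfolding U_def by blast
  moreover have "U \<subseteq> closure C"
  proof
    fix z assume z: "z \<in> U"
    have zS: "\<forall>g\<in>?S. z \<bullet> g \<ge> 0"
    proof
      fix g assume g: "g \<in> ?S"
      show "z \<bullet> g \<ge> 0"
      proof (cases "g = a")
        case True then show ?thesis using z by (simp add: U_def hyp_def)
      next
        case False then have "inner g z > 0" using z g by (auto simp: U_def V_def)
        then show ?thesis by (simp add: inner_commute)
      qed
    qed
    have zP: "\<forall>g\<in>?P. z \<bullet> g \<ge> 0" using simple_nnc[OF C S(1,2)] nnc_inner_nonneg'[OF zS] by blast
    have inC: "z + t *\<^sub>R x0 \<in> C" if t: "t > 0" for t
    proof -
      have "z + t *\<^sub>R x0 \<in> cell R ?P"
        unfolding cell_def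
      proof (intro CollectI ballI conjI impI)
        fix b assume bR: "b \<in> R"
        {
          assume bP: "b \<in> ?P"
          have "(z + t *\<^sub>R x0) \<bullet> b = z \<bullet> b + t * (x0 \<bullet> b)" by (simp add: inner_add_left)
          moreover have "t * (x0 \<bullet> b) > 0" using t x0pos bP by simp
          moreover have "z \<bullet> b \<ge> 0" using zP bP by blast
          ultimately show "(z + t *\<^sub>R x0) \<bullet> b > 0" by linarith
        }
        {
          assume bP: "b \<notin> ?P"
          then have nb: "- b \<in> ?P" using neg_pos[OF R C bR] by simp
          have "(z + t *\<^sub>R x0) \<bullet> b = z \<bullet> b + t * (x0 \<bullet> b)" by (simp add: inner_add_left)
          moreover have "t * (x0 \<bullet> (- b)) > 0" using t x0pos nb by (intro mult_pos_pos) auto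
          moreover have "z \<bullet> (- b) \<ge> 0" using zP nb by blast
          ultimately show "(z + t *\<^sub>R x0) \<bullet> b < 0" by simp
        }
      qed
      then show ?thesis using ch_cell[OF C] by simp
    qed
    show "z \<in> closure C"
      unfolding closure_approachable
    proof (intro allI impI)
      fix e :: real assume e: "e > 0"
      define t where "t = e / (norm x0 + 1)"
      have t: "t > 0" using e by (simp add: t_def add_nonneg_pos)
      have "dist (z + t *\<^sub>R x0) z = t * norm x0" using t by (simp add: dist_norm)
      also have "\<dots> < e"
      proof -
        have "t * norm x0 < t * (norm x0 + 1)" using t by simp
        also have "\<dots> = e"
        proof -
          have "norm x0 + 1 \<noteq> 0" using norm_ge_zero[of x0] by linarith
          then show ?thesis by (simp add: t_def)
        qed
        finally show ?thesis .
      qed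
      finally show "\<exists>y\<in>C. dist y z < e" using inC[OF t] by blast
    qed
  qed
  ultimately show ?thesis unfolding wall_def using Uo U_def by blast
qed

lemma wall_iff_simple:
  assumes R: "root_system R" and C: "C \<in> Ch R" and a: "a \<in> R"
  shows "wall C a \<longleftrightarrow> a \<in> simple_roots R C \<or> - a \<in> simple_roots R C"
  using wall_simple[OF R C a] simple_wall[OF R C] wall_neg by metis

lemma ct_sym: "connected_through C D L = connected_through D C L"
  unfolding connected_through_def by (simp add: Int_commute Int_left_commute)

lemma ct_wall: "connected_through C D (hyp a) \<Longrightarrow> wall C a"
  unfolding connected_through_def wall_def by blast

lemma wall_ct_self: "wall C a \<Longrightarrow> connected_through C C (hyp a)"
  unfolding connected_through_def wall_def by blast

lemma wall_ct_refl:
  assumes "wall C a" "a \<noteq> 0"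
  shows "connected_through C (refl_vec a ` C) (hyp a)"
proof -
  obtain U where U: "openin (top_of_set (hyp a)) U" "U \<noteq> {}" "U \<subseteq> closure C \<inter> hyp a"
    using assms by (auto simp: wall_def)
  have "U \<subseteq> closure (refl_vec a ` C)"
  proof
    fix u assume u: "u \<in> U"
    then have "u = refl_vec a u" using U refl_vec_hyp by (metis Int_iff subsetD)
    also have "\<dots> \<in> refl_vec a ` closure C" using u U by blast
    also have "\<dots> \<subseteq> closure (refl_vec a ` C)" by (rule closure_linear_image_subset[OF linear_refl_vec])
    finally show "u \<in> closure (refl_vec a ` C)" .
  qed
  then show ?thesis unfolding connected_through_def using U by blast
qed



lemma refl_inj: "a \<noteq> 0 \<Longrightarrow> inj (refl_vec a)"
  by (metis injI refl_vec_invol)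

lemma refl_mem_img: "a \<noteq> 0 \<Longrightarrow> (x \<in> refl_vec a ` X) = (refl_vec a x \<in> X)"
  by (metis image_iff refl_vec_invol)

lemma img_cell:
  assumes R: "root_system R" and b: "b \<in> R"
  shows "refl_vec b ` cell R P = cell R (refl_vec b ` P)"
proof -
  let ?f = "refl_vec b"
  have b0: "b \<noteq> 0" using rs_nz[OF R b] .
  have fR: "?f a \<in> R" if "a \<in> R" for a using rs_refl[OF R b that] .
  have inv: "?f (?f a) = a" for a using refl_vec_invol[OF b0] .
  show ?thesis
  proof (intro equalityI subsetI)
    fix y assume "y \<in> ?f ` cell R P"
    then obtain x where x: "x \<in> cell R P" "y = ?f x" by blast
    show "y \<in> cell R (?f ` P)" unfolding cell_def
    proof (intro CollectI ballI conjI impI)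
      fix a assume aR: "a \<in> R"
      have ya: "y \<bullet> a = x \<bullet> ?f a" using x(2) refl_vec_adj by simp
      {
        assume "a \<in> ?f ` P"
        then have "?f a \<in> P" using refl_mem_img[OF b0] by blast
        then show "y \<bullet> a > 0" using x(1) fR[OF aR] ya by (auto simp: cell_def)
      }
      {
        assume "a \<notin> ?f ` P"
        then have "?f a \<notin> P" using refl_mem_img[OF b0] by blast
        then show "y \<bullet> a < 0" using x(1) fR[OF aR] ya by (auto simp: cell_def)
      }
    qed
  next
    fix y assume y: "y \<in> cell R (?f ` P)"
    have "?f y \<in> cell R P" unfolding cell_def
    proof (intro CollectI ballI conjI impI)
      fix a assume aR: "a \<in> R"
      have ya: "?f y \<bullet> a = y \<bullet> ?f a" by (rule refl_vec_adj)
      {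
        assume "a \<in> P"
        then have "?f a \<in> ?f ` P" by blast
        then show "?f y \<bullet> a > 0" using y fR[OF aR] ya by (auto simp: cell_def)
      }
      {
        assume "a \<notin> P"
        then have "?f a \<notin> ?f ` P" using refl_mem_img[OF b0] inv by metis
        then show "?f y \<bullet> a < 0" using y fR[OF aR] ya by (auto simp: cell_def)
      }
    qed
    then show "y \<in> ?f ` cell R P" using inv by (metis image_eqI)
  qed
qed

lemma ch_img:
  assumes R: "root_system R" and b: "b \<in> R" and C: "C \<in> Ch R"
  shows "refl_vec b ` C \<in> Ch R" "pos_roots R (refl_vec b ` C) = refl_vec b ` pos_roots R C"
proof -
  let ?f = "refl_vec b"
  let ?P = "pos_roots R C"
  have eq: "?f ` C = cell R (?f ` ?P)" using img_cell[OF R b, of ?P] ch_cell[OF C] by simp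
  have sub: "?f ` ?P \<subseteq> R" using rs_refl_image[OF R b] pos_roots_sub by blast
  have ne: "cell R (?f ` ?P) \<noteq> {}" using eq ch_nonempty[OF C] by auto
  show "?f ` C \<in> Ch R" using cell_ch[OF ne sub] eq by simp
  show "pos_roots R (?f ` C) = ?f ` ?P" using pos_cell[OF ne sub] eq by simp
qed

lemma refl_sum: "refl_vec b (\<Sum>g\<in>S. c g *\<^sub>R g) = (\<Sum>g\<in>S. c g *\<^sub>R refl_vec b g)"
  using linear_refl_vec[of b] by (simp add: linear_sum linear_scale)

lemma simple_img:
  assumes R: "root_system R" and b: "b \<in> R" and C: "C \<in> Ch R"
  shows "simple_roots R (refl_vec b ` C) = refl_vec b ` simple_roots R C"
proof -
  let ?f = "refl_vec b"
  let ?S = "simple_roots R C"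
  have b0: "b \<noteq> 0" using rs_nz[OF R b] .
  have inv: "?f (?f a) = a" for a using refl_vec_invol[OF b0] .
  have S: "simple_system R ?S" "?S \<subseteq> pos_roots R C" using simple_roots_props[OF R C] by auto
  have fin: "finite ?S" and ind: "independent ?S" and SR: "?S \<subseteq> R" using S by (auto simp: simple_system_def)
  have ss: "simple_system R (?f ` ?S)"
    unfolding simple_system_def
  proof (intro conjI ballI)
    show "?f ` ?S \<subseteq> R" using SR rs_refl_image[OF R b] by blast
    show "finite (?f ` ?S)" using fin by simp
    show "independent (?f ` ?S)"
      by (rule linear_independent_injective_image[OF linear_refl_vec ind])
        (rule inj_on_subset[OF refl_inj[OF b0] subset_UNIV])
    fix a assume aR: "a \<in> R"
    have faR: "?f a \<in> R" using rs_refl[OF R b aR] .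
    obtain c where c: "?f a = (\<Sum>g\<in>?S. c g *\<^sub>R g)" "(\<forall>g\<in>?S. 0 \<le> c g) \<or> (\<forall>g\<in>?S. c g \<le> 0)"
      using S(1) faR unfolding simple_system_def by blast
    have "a = ?f (?f a)" using inv by simp
    also have "\<dots> = (\<Sum>g\<in>?S. c g *\<^sub>R ?f g)" unfolding c(1) by (rule refl_sum)
    also have "\<dots> = (\<Sum>h\<in>?f ` ?S. c (?f h) *\<^sub>R h)"
      by (subst sum.reindex[OF inj_on_subset[OF refl_inj[OF b0] subset_UNIV]]) (simp add: inv)
    finally have "a = (\<Sum>h\<in>?f ` ?S. c (?f h) *\<^sub>R h)" .
    moreover have "(\<forall>h\<in>?f ` ?S. 0 \<le> c (?f h)) \<or> (\<forall>h\<in>?f ` ?S. c (?f h) \<le> 0)"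
      using c(2) inv by auto
    ultimately show "\<exists>c. a = (\<Sum>h\<in>?f ` ?S. c h *\<^sub>R h) \<and>
        ((\<forall>h\<in>?f ` ?S. 0 \<le> c h) \<or> (\<forall>h\<in>?f ` ?S. c h \<le> 0))"
      by (intro exI[of _ "\<lambda>h. c (?f h)"] conjI)
  qed
  have "?f ` ?S \<subseteq> pos_roots R (?f ` C)" using ch_img(2)[OF R b C] S(2) by auto
  then show ?thesis using simple_roots_eq[OF R ch_img(1)[OF R b C] ss] by simp
qed

lemma lift_img:
  assumes Phi: "root_system \<Phi>" and sub: "root_subsystem \<Phi> \<Psi>" and b: "b \<in> \<Psi>"
    and C: "C \<in> Ch \<Phi>" and D: "D \<in> Ch \<Psi>" and L: "lifts_chamber \<Phi> \<Psi> C D"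
  shows "lifts_chamber \<Phi> \<Psi> (refl_vec b ` C) (refl_vec b ` D)"
proof -
  have Psi: "root_system \<Psi>" by (rule sub_rs[OF Phi sub])
  have bP: "b \<in> \<Phi>" using b sub by (auto simp: root_subsystem_def)
  show ?thesis using L unfolding lifts_chamber_def
    simple_img[OF Psi b D] simple_img[OF Phi bP C] by blast
qed

lemma agree:
  assumes R: "root_system R" and C: "C \<in> Ch R" and C': "C' \<in> Ch R" and b: "b \<in> R"
    and ct: "connected_through C C' (hyp b)" and g: "g \<in> R" "g \<noteq> b" "g \<noteq> - b"
  shows "g \<in> pos_roots R C \<longleftrightarrow> g \<in> pos_roots R C'"
proof -
  obtain U where U: "openin (top_of_set (hyp b)) U" "U \<noteq> {}" "U \<subseteq> closure C \<inter> closure C' \<inter> hyp b"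
    using ct by (auto simp: connected_through_def)
  have "\<not> U \<subseteq> hyp g"
  proof
    assume "U \<subseteq> hyp g"
    then have "hyp b \<subseteq> hyp g" using hyp_open_sub[OF U(1,2)] by blast
    then show False using parallel_root[OF R b g(1)] g by blast
  qed
  then obtain u where u: "u \<in> U" "u \<bullet> g \<noteq> 0" by (auto simp: hyp_def)
  have key: "g \<in> pos_roots R X \<longleftrightarrow> u \<bullet> g > 0" if X: "X \<in> Ch R" "u \<in> closure X" for X
  proof
    assume "g \<in> pos_roots R X"
    then show "u \<bullet> g > 0" using closure_pos[OF X(1) _ X(2)] u(2) by force
  next
    assume "u \<bullet> g > 0"
    then show "g \<in> pos_roots R X" using closure_neg[OF X(1) g(1) _ X(2)] by force
  qed
  show ?thesis using key[OF C] key[OF C'] u U by blast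
qed

lemma same_side:
  assumes R: "root_system R" and b: "b \<in> R" and C: "C \<in> Ch R" and C1: "C1 \<in> Ch R" and C2: "C2 \<in> Ch R"
    and ct1: "connected_through C C1 (hyp b)" and ct2: "connected_through C C2 (hyp b)"
    and bb: "b \<in> pos_roots R C1 \<longleftrightarrow> b \<in> pos_roots R C2"
  shows "C1 = C2"
proof (rule chamber_eq[OF C1 C2])
  have "g \<in> pos_roots R C1 \<longleftrightarrow> g \<in> pos_roots R C2" if g: "g \<in> R" for g
  proof -
    consider "g = b" | "g = - b" | "g \<noteq> b \<and> g \<noteq> - b" by blast
    then show ?thesis
    proof cases
      case 1 then show ?thesis using bb by simp
    next
      case 2 then show ?thesis using neg_pos[OF R C1 b] neg_pos[OF R C2 b] bb by simp
    next
      case 3 then show ?thesis using agree[OF R C C1 b ct1 g] agree[OF R C C2 b ct2 g] by simp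
    qed
  qed
  then show "pos_roots R C1 = pos_roots R C2" using pos_roots_sub by blast
qed

lemma lift_sub:
  assumes Phi: "root_system \<Phi>" and sub: "root_subsystem \<Phi> \<Psi>"
    and C: "C \<in> Ch \<Phi>" and D: "D \<in> Ch \<Psi>" and L: "lifts_chamber \<Phi> \<Psi> C D"
  shows "C \<subseteq> D"
proof
  fix x assume x: "x \<in> C"
  have Psi: "root_system \<Psi>" by (rule sub_rs[OF Phi sub])
  let ?SD = "simple_roots \<Psi> D"
  have SD: "simple_system \<Psi> ?SD" "?SD \<subseteq> pos_roots \<Psi> D" using simple_roots_props[OF Psi D] by auto
  have fin: "finite ?SD" using SD by (simp add: simple_system_def)
  have xS: "\<forall>g\<in>?SD. x \<bullet> g > 0"
    using L simple_roots_props(2)[OF Phi C] x unfolding lifts_chamber_def pos_roots_def by blast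
  have pos: "x \<bullet> a > 0" if a: "a \<in> pos_roots \<Psi> D" for a
  proof -
    have "a \<in> \<Psi>" using a pos_roots_sub by blast
    then have "a \<noteq> 0" using rs_nz[OF Psi] by blast
    then show ?thesis using nnc_inner_pos[OF fin xS simple_nnc[OF D SD a]] by simp
  qed
  have "x \<in> cell \<Psi> (pos_roots \<Psi> D)" unfolding cell_def
  proof (intro CollectI ballI conjI impI)
    fix a assume aR: "a \<in> \<Psi>"
    show "x \<bullet> a > 0" if "a \<in> pos_roots \<Psi> D" using pos[OF that] .
    show "x \<bullet> a < 0" if "a \<notin> pos_roots \<Psi> D"
    proof -
      have "- a \<in> pos_roots \<Psi> D" using that neg_pos[OF Psi D aR] by simp
      then show ?thesis using pos by fastforce
    qed
  qed
  then show "x \<in> D" using ch_cell[OF D] by simp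
qed

lemma pos_lift:
  assumes C: "C \<in> Ch \<Phi>" and D: "D \<in> Ch \<Psi>" and CD: "C \<subseteq> D" and b: "b \<in> \<Psi>" "b \<in> \<Phi>"
  shows "b \<in> pos_roots \<Phi> C \<longleftrightarrow> b \<in> pos_roots \<Psi> D"
proof -
  obtain x where x: "x \<in> C" using ch_point[OF C] by blast
  show ?thesis using ch_pos_iff[OF C b(2) x] ch_pos_iff[OF D b(1)] x CD by blast
qed

lemma step:
  assumes Phi: "root_system \<Phi>" and sub: "root_subsystem \<Phi> \<Psi>"
    and D: "D \<in> Ch \<Psi>" and D': "D' \<in> Ch \<Psi>" and b: "b \<in> \<Psi>"
    and ct: "connected_through D D' (hyp b)"
    and C: "C \<in> Ch \<Phi>" and L: "lifts_chamber \<Phi> \<Psi> C D"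
  shows "\<exists>!C'. C' \<in> Ch \<Phi> \<and> connected_through C C' (hyp b) \<and> lifts_chamber \<Phi> \<Psi> C' D'"
proof -
  have Psi: "root_system \<Psi>" by (rule sub_rs[OF Phi sub])
  have bP: "b \<in> \<Phi>" using b sub by (auto simp: root_subsystem_def)
  have b0: "b \<noteq> 0" using rs_nz[OF Psi b] .
  let ?f = "refl_vec b"
  have wD: "wall D b" by (rule ct_wall[OF ct])
  have "b \<in> simple_roots \<Psi> D \<or> - b \<in> simple_roots \<Psi> D" by (rule wall_simple[OF Psi D b wD])
  then have "b \<in> simple_roots \<Phi> C \<or> - b \<in> simple_roots \<Phi> C" using L by (auto simp: lifts_chamber_def)
  then have wC: "wall C b" using simple_wall[OF Phi C] wall_neg by metis
  have ex: "\<exists>C'. C' \<in> Ch \<Phi> \<and> connected_through C C' (hyp b) \<and> lifts_chamber \<Phi> \<Psi> C' D'"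
  proof (cases "D' = D")
    case True
    then show ?thesis using C wall_ct_self[OF wC] L by blast
  next
    case False
    have fD: "?f ` D \<in> Ch \<Psi>" by (rule ch_img(1)[OF Psi b D])
    have ctf: "connected_through D (?f ` D) (hyp b)" by (rule wall_ct_refl[OF wD b0])
    have ctD: "connected_through D D (hyp b)" by (rule wall_ct_self[OF wD])
    have bD': "b \<in> pos_roots \<Psi> D' \<longleftrightarrow> b \<notin> pos_roots \<Psi> D"
    proof (rule ccontr)
      assume "\<not> ?thesis"
      then have "b \<in> pos_roots \<Psi> D' \<longleftrightarrow> b \<in> pos_roots \<Psi> D" by blast
      then have "D' = D" by (rule same_side[OF Psi b D D' D ct ctD])
      then show False using False by simp
    qed
    have "b \<in> pos_roots \<Psi> (?f ` D) \<longleftrightarrow> ?f b \<in> pos_roots \<Psi> D"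
      unfolding ch_img(2)[OF Psi b D] by (rule refl_mem_img[OF b0])
    also have "\<dots> \<longleftrightarrow> b \<notin> pos_roots \<Psi> D" using neg_pos[OF Psi D b] refl_vec_self[OF b0] by simp
    finally have bfD: "b \<in> pos_roots \<Psi> (?f ` D) \<longleftrightarrow> b \<notin> pos_roots \<Psi> D" .
    have "D' = ?f ` D" using same_side[OF Psi b D D' fD ct ctf] bD' bfD by simp
    moreover have "?f ` C \<in> Ch \<Phi>" by (rule ch_img(1)[OF Phi bP C])
    moreover have "connected_through C (?f ` C) (hyp b)" by (rule wall_ct_refl[OF wC b0])
    moreover have "lifts_chamber \<Phi> \<Psi> (?f ` C) (?f ` D)" by (rule lift_img[OF Phi sub b C D L])
    ultimately show ?thesis by blast
  qed
  show ?thesis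
  proof (rule ex_ex1I[OF ex])
    fix C1 C2
    assume h1: "C1 \<in> Ch \<Phi> \<and> connected_through C C1 (hyp b) \<and> lifts_chamber \<Phi> \<Psi> C1 D'"
      and h2: "C2 \<in> Ch \<Phi> \<and> connected_through C C2 (hyp b) \<and> lifts_chamber \<Phi> \<Psi> C2 D'"
    have s1: "C1 \<subseteq> D'" using lift_sub[OF Phi sub _ D'] h1 by blast
    have s2: "C2 \<subseteq> D'" using lift_sub[OF Phi sub _ D'] h2 by blast
    have "b \<in> pos_roots \<Phi> C1 \<longleftrightarrow> b \<in> pos_roots \<Phi> C2"
      using pos_lift[OF _ D' s1 b bP] pos_lift[OF _ D' s2 b bP] h1 h2 by blast
    then show "C1 = C2" using same_side[OF Phi bP C] h1 h2 by blast
  qed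
qed



theorem theorem2:
  fixes \<Phi> \<Psi> :: "'a::euclidean_space set"
    and Ds Ws :: "'a set list" and i :: nat and C :: "'a set"
  assumes "root_system \<Phi>"
    and "root_subsystem \<Phi> \<Psi>"
    and "gallery \<Psi> (Ds, Ws)"
    and "i \<le> length Ws"
    and "C \<in> Ch \<Phi>"
    and "lifts_chamber \<Phi> \<Psi> C (Ds ! i)"
  shows "\<exists>!\<Gamma>. gallery \<Phi> \<Gamma> \<and> lifts_gallery \<Phi> \<Psi> \<Gamma> (Ds, Ws) \<and> fst \<Gamma> ! i = C"
proof -
  note Phi = assms(1) and sub = assms(2) and gal = assms(3) and iW = assms(4) and C = assms(5)
    and LC = assms(6)
  define n where "n = length Ws"
  have lenD: "length Ds = Suc n" and DCh: "\<And>j. j < Suc n \<Longrightarrow> Ds ! j \<in> Ch \<Psi>"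
    and Dct: "\<forall>j<n. \<exists>a\<in>\<Psi>. Ws ! j = hyp a \<and> connected_through (Ds ! j) (Ds ! Suc j) (hyp a)"
    using gal unfolding gallery_def n_def by (auto simp: Let_def)
  obtain be where be: "\<And>j. j < n \<Longrightarrow> be j \<in> \<Psi> \<and> Ws ! j = hyp (be j) \<and>
      connected_through (Ds ! j) (Ds ! Suc j) (hyp (be j))"
    using Dct by metis
  have i: "i \<le> n" using iW n_def by simp
  have PsiPhi: "\<Psi> \<subseteq> \<Phi>" using sub by (simp add: root_subsystem_def)
  let ?L = "lifts_chamber \<Phi> \<Psi>"
  define good where "good Cs \<longleftrightarrow> length Cs = Suc n \<and>
      (\<forall>j<Suc n. Cs ! j \<in> Ch \<Phi> \<and> ?L (Cs ! j) (Ds ! j)) \<and>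
      (\<forall>j<n. connected_through (Cs ! j) (Cs ! Suc j) (hyp (be j))) \<and> Cs ! i = C" for Cs
  have equiv: "(gallery \<Phi> G \<and> lifts_gallery \<Phi> \<Psi> G (Ds, Ws) \<and> fst G ! i = C) \<longleftrightarrow>
      (G = (fst G, Ws) \<and> good (fst G))" for G
  proof
    assume h: "gallery \<Phi> G \<and> lifts_gallery \<Phi> \<Psi> G (Ds, Ws) \<and> fst G ! i = C"
    have sW: "snd G = Ws" using h by (simp add: lifts_gallery_def)
    have "good (fst G)" unfolding good_def
    proof (intro conjI allI impI)
      show "length (fst G) = Suc n" using h lenD by (simp add: lifts_gallery_def)
      fix j assume j: "j < Suc n"
      then have j': "j < length (fst G)" using h lenD by (simp add: lifts_gallery_def)
      show "fst G ! j \<in> Ch \<Phi>" using h j' by (auto simp: gallery_def Let_def)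
      show "?L (fst G ! j) (Ds ! j)" using h j' by (auto simp: lifts_gallery_def)
    next
      fix j assume j: "j < n"
      then obtain a where "a \<in> \<Phi>" "Ws ! j = hyp a"
          "connected_through (fst G ! j) (fst G ! Suc j) (hyp a)"
        using h sW n_def by (auto simp: gallery_def Let_def)
      then show "connected_through (fst G ! j) (fst G ! Suc j) (hyp (be j))" using be[OF j] by simp
    next
      show "fst G ! i = C" using h by simp
    qed
    then show "G = (fst G, Ws) \<and> good (fst G)" using sW by (metis prod.collapse)
  next
    assume h: "G = (fst G, Ws) \<and> good (fst G)"
    have g: "good (fst G)" using h by simp
    have sW: "snd G = Ws" using h by (metis snd_conv)
    have "gallery \<Phi> G" unfolding gallery_def Let_def
    proof (intro conjI allI impI)
      show "length (fst G) = Suc (length (snd G))" using g sW n_def by (simp add: good_def)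
      fix j assume "j < length (fst G)"
      then show "fst G ! j \<in> Ch \<Phi>" using g by (simp add: good_def)
    next
      fix j assume "j < length (snd G)"
      then have j: "j < n" using sW n_def by simp
      show "\<exists>a\<in>\<Phi>. snd G ! j = hyp a \<and> connected_through (fst G ! j) (fst G ! Suc j) (hyp a)"
        using be[OF j] g j PsiPhi sW by (auto simp: good_def)
    qed
    moreover have "lifts_gallery \<Phi> \<Psi> G (Ds, Ws)"
      using g sW lenD by (auto simp: lifts_gallery_def good_def)
    moreover have "fst G ! i = C" using g by (simp add: good_def)
    ultimately show "gallery \<Phi> G \<and> lifts_gallery \<Phi> \<Psi> G (Ds, Ws) \<and> fst G ! i = C" by blast
  qed
  have fwd: "\<exists>!Y. Y \<in> Ch \<Phi> \<and> connected_through X Y (hyp (be j)) \<and> ?L Y (Ds ! Suc j)"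
    if j: "j < n" and X: "X \<in> Ch \<Phi>" "?L X (Ds ! j)" for j X
    using step[OF Phi sub DCh DCh _ _ X] be[OF j] j by simp
  have bwd: "\<exists>!Y. Y \<in> Ch \<Phi> \<and> connected_through X Y (hyp (be j)) \<and> ?L Y (Ds ! j)"
    if j: "j < n" and X: "X \<in> Ch \<Phi>" "?L X (Ds ! Suc j)" for j X
  proof -
    have "connected_through (Ds ! Suc j) (Ds ! j) (hyp (be j))" using be[OF j] ct_sym by blast
    then show ?thesis using step[OF Phi sub DCh DCh _ _ X] be[OF j] j by simp
  qed
  have uniq: "Cs1 = Cs2" if g1: "good Cs1" and g2: "good Cs2" for Cs1 Cs2
  proof -
    have F: "\<forall>m. i + m \<le> n \<longrightarrow> Cs1 ! (i + m) = Cs2 ! (i + m)"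
    proof
      fix m show "i + m \<le> n \<longrightarrow> Cs1 ! (i + m) = Cs2 ! (i + m)"
      proof (induction m)
        case 0 then show ?case using g1 g2 by (simp add: good_def)
      next
        case (Suc m)
        show ?case
        proof
          assume im: "i + Suc m \<le> n"
          then have j: "i + m < n" by simp
          have eq: "Cs1 ! (i + m) = Cs2 ! (i + m)" using Suc im by simp
          let ?X = "Cs1 ! (i + m)"
          have X: "?X \<in> Ch \<Phi>" "?L ?X (Ds ! (i + m))" using g1 j by (auto simp: good_def)
          have "Cs1 ! Suc (i + m) \<in> Ch \<Phi> \<and> connected_through ?X (Cs1 ! Suc (i + m)) (hyp (be (i + m)))
              \<and> ?L (Cs1 ! Suc (i + m)) (Ds ! Suc (i + m))"
            using g1 j by (auto simp: good_def)
          moreover have "Cs2 ! Suc (i + m) \<in> Ch \<Phi> \<and> connected_through ?X (Cs2 ! Suc (i + m)) (hyp (be (i + m)))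
              \<and> ?L (Cs2 ! Suc (i + m)) (Ds ! Suc (i + m))"
            using g2 j eq by (auto simp: good_def)
          ultimately show "Cs1 ! (i + Suc m) = Cs2 ! (i + Suc m)"
            using fwd[OF j X] by (metis add_Suc_right)
        qed
      qed
    qed
    have B: "\<forall>m. m \<le> i \<longrightarrow> Cs1 ! (i - m) = Cs2 ! (i - m)"
    proof
      fix m show "m \<le> i \<longrightarrow> Cs1 ! (i - m) = Cs2 ! (i - m)"
      proof (induction m)
        case 0 then show ?case using g1 g2 by (simp add: good_def)
      next
        case (Suc m)
        show ?case
        proof
          assume mi: "Suc m \<le> i"
          define j where "j = i - Suc m"
          have j: "j < n" using mi i unfolding j_def by simp
          have sj: "Suc j = i - m" using mi unfolding j_def by simp
          have eq: "Cs1 ! Suc j = Cs2 ! Suc j" using Suc mi sj by simp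
          let ?X = "Cs1 ! Suc j"
          have X: "?X \<in> Ch \<Phi>" "?L ?X (Ds ! Suc j)" using g1 j by (auto simp: good_def)
          have c1: "connected_through (Cs1 ! j) (Cs1 ! Suc j) (hyp (be j))"
            using g1 j unfolding good_def by blast
          have c2: "connected_through (Cs2 ! j) (Cs2 ! Suc j) (hyp (be j))"
            using g2 j unfolding good_def by blast
          have "Cs1 ! j \<in> Ch \<Phi> \<and> connected_through ?X (Cs1 ! j) (hyp (be j)) \<and> ?L (Cs1 ! j) (Ds ! j)"
            using g1 j ct_sym[of ?X] c1 by (auto simp: good_def)
          moreover have "Cs2 ! j \<in> Ch \<Phi> \<and> connected_through ?X (Cs2 ! j) (hyp (be j)) \<and> ?L (Cs2 ! j) (Ds ! j)"
            using g2 j eq ct_sym[of ?X] c2 by (auto simp: good_def)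
          ultimately show "Cs1 ! (i - Suc m) = Cs2 ! (i - Suc m)"
            using bwd[OF j X] unfolding j_def by metis
        qed
      qed
    qed
    show ?thesis
    proof (rule nth_equalityI)
      show "length Cs1 = length Cs2" using g1 g2 by (simp add: good_def)
      fix k assume "k < length Cs1"
      then have k: "k \<le> n" using g1 by (simp add: good_def)
      show "Cs1 ! k = Cs2 ! k"
      proof (cases "i \<le> k")
        case True then show ?thesis using F[rule_format, of "k - i"] k by simp
      next
        case False then show ?thesis using B[rule_format, of "i - k"] by simp
      qed
    qed
  qed
  define nxt where "nxt j X = (THE Y. Y \<in> Ch \<Phi> \<and> connected_through X Y (hyp (be j)) \<and> ?L Y (Ds ! Suc j))" for j X
  define prv where "prv j X = (THE Y. Y \<in> Ch \<Phi> \<and> connected_through X Y (hyp (be j)) \<and> ?L Y (Ds ! j))" for j X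
  define fw where "fw = rec_nat C (\<lambda>m X. nxt (i + m) X)"
  define bw where "bw = rec_nat C (\<lambda>m X. prv (i - Suc m) X)"
  have fw0: "fw 0 = C" and fwS: "fw (Suc m) = nxt (i + m) (fw m)" for m by (simp_all add: fw_def)
  have bw0: "bw 0 = C" and bwS: "bw (Suc m) = prv (i - Suc m) (bw m)" for m by (simp_all add: bw_def)
  have FW: "i + m \<le> n \<longrightarrow> fw m \<in> Ch \<Phi> \<and> ?L (fw m) (Ds ! (i + m)) \<and>
      (i + m < n \<longrightarrow> connected_through (fw m) (fw (Suc m)) (hyp (be (i + m))))" for m
  proof (induction m)
    case 0
    show ?case
    proof
      assume "i + 0 \<le> n"
      have "i + 0 < n \<longrightarrow> connected_through (fw 0) (fw (Suc 0)) (hyp (be (i + 0)))"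
        using theI'[OF fwd[of "i" C]] C LC by (simp add: fw0 fwS nxt_def)
      then show "fw 0 \<in> Ch \<Phi> \<and> ?L (fw 0) (Ds ! (i + 0)) \<and>
          (i + 0 < n \<longrightarrow> connected_through (fw 0) (fw (Suc 0)) (hyp (be (i + 0))))"
        using C LC by (simp add: fw0)
    qed
  next
    case (Suc m)
    show ?case
    proof
      assume im: "i + Suc m \<le> n"
      then have j: "i + m < n" by simp
      have X: "fw m \<in> Ch \<Phi>" "?L (fw m) (Ds ! (i + m))" using Suc im by auto
      have Y: "fw (Suc m) \<in> Ch \<Phi> \<and> ?L (fw (Suc m)) (Ds ! (i + Suc m))"
        using theI'[OF fwd[OF j X]] by (simp add: fwS nxt_def)
      have "i + Suc m < n \<longrightarrow> connected_through (fw (Suc m)) (fw (Suc (Suc m))) (hyp (be (i + Suc m)))"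
        using theI'[OF fwd[of "i + Suc m" "fw (Suc m)"]] Y by (simp add: fwS[of "Suc m"] nxt_def)
      then show "fw (Suc m) \<in> Ch \<Phi> \<and> ?L (fw (Suc m)) (Ds ! (i + Suc m)) \<and>
          (i + Suc m < n \<longrightarrow> connected_through (fw (Suc m)) (fw (Suc (Suc m))) (hyp (be (i + Suc m))))"
        using Y by simp
    qed
  qed
  have BW: "m \<le> i \<longrightarrow> bw m \<in> Ch \<Phi> \<and> ?L (bw m) (Ds ! (i - m)) \<and>
      (m < i \<longrightarrow> connected_through (bw m) (bw (Suc m)) (hyp (be (i - Suc m))))" for m
  proof (induction m)
    case 0
    show ?case
    proof
      assume "0 \<le> i"
      have "0 < i \<longrightarrow> connected_through (bw 0) (bw (Suc 0)) (hyp (be (i - Suc 0)))"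
      proof
        assume i0: "0 < i"
        then have j: "i - Suc 0 < n" using i by simp
        have "Suc (i - Suc 0) = i" using i0 by simp
        then have "?L C (Ds ! Suc (i - Suc 0))" using LC by simp
        then show "connected_through (bw 0) (bw (Suc 0)) (hyp (be (i - Suc 0)))"
          using theI'[OF bwd[OF j C]] by (simp add: bw0 bwS prv_def)
      qed
      then show "bw 0 \<in> Ch \<Phi> \<and> ?L (bw 0) (Ds ! (i - 0)) \<and>
          (0 < i \<longrightarrow> connected_through (bw 0) (bw (Suc 0)) (hyp (be (i - Suc 0))))"
        using C LC by (simp add: bw0)
    qed
  next
    case (Suc m)
    show ?case
    proof
      assume mi: "Suc m \<le> i"
      define j where "j = i - Suc m"
      have j: "j < n" using mi i unfolding j_def by simp
      have sj: "Suc j = i - m" using mi unfolding j_def by simp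
      have X: "bw m \<in> Ch \<Phi>" "?L (bw m) (Ds ! Suc j)" using Suc mi sj by auto
      have Y: "bw (Suc m) \<in> Ch \<Phi> \<and> ?L (bw (Suc m)) (Ds ! (i - Suc m))"
        using theI'[OF bwd[OF j X]] by (simp add: bwS prv_def j_def)
      have "Suc m < i \<longrightarrow> connected_through (bw (Suc m)) (bw (Suc (Suc m))) (hyp (be (i - Suc (Suc m))))"
      proof
        assume mi2: "Suc m < i"
        define j2 where "j2 = i - Suc (Suc m)"
        have j2: "j2 < n" using mi2 i unfolding j2_def by simp
        have sj2: "Suc j2 = i - Suc m" using mi2 unfolding j2_def by simp
        have X2: "bw (Suc m) \<in> Ch \<Phi>" "?L (bw (Suc m)) (Ds ! Suc j2)" using Y sj2 by auto
        show "connected_through (bw (Suc m)) (bw (Suc (Suc m))) (hyp (be (i - Suc (Suc m))))"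
          using theI'[OF bwd[OF j2 X2]] by (simp add: bwS[of "Suc m"] prv_def j2_def)
      qed
      then show "bw (Suc m) \<in> Ch \<Phi> \<and> ?L (bw (Suc m)) (Ds ! (i - Suc m)) \<and>
          (Suc m < i \<longrightarrow> connected_through (bw (Suc m)) (bw (Suc (Suc m))) (hyp (be (i - Suc (Suc m)))))"
        using Y by simp
    qed
  qed
  define Fk where "Fk k = (if i \<le> k then fw (k - i) else bw (i - k))" for k
  define Cs where "Cs = map Fk [0..<Suc n]"
  have FkS: "Fk (Suc k) = bw (i - Suc k)" if "k < i" for k
  proof (cases "Suc k = i")
    case True then show ?thesis by (simp add: Fk_def fw0 bw0)
  next
    case False then show ?thesis using that by (simp add: Fk_def)
  qed
  have "good Cs" unfolding good_def
  proof (intro conjI allI impI)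
    show "length Cs = Suc n" by (simp add: Cs_def)
    fix k assume k: "k < Suc n"
    have "Fk k \<in> Ch \<Phi> \<and> ?L (Fk k) (Ds ! k)"
    proof (cases "i \<le> k")
      case True then show ?thesis using FW[of "k - i"] k by (simp add: Fk_def)
    next
      case False then show ?thesis using BW[of "i - k"] by (simp add: Fk_def)
    qed
    then show "Cs ! k \<in> Ch \<Phi>" "?L (Cs ! k) (Ds ! k)" using k by (simp_all add: Cs_def del: upt_Suc)
  next
    fix k assume k: "k < n"
    have "connected_through (Fk k) (Fk (Suc k)) (hyp (be k))"
    proof (cases "i \<le> k")
      case True
      then have "Fk k = fw (k - i)" "Fk (Suc k) = fw (Suc (k - i))" by (simp_all add: Fk_def Suc_diff_le)
      then show ?thesis using FW[of "k - i"] True k by simp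
    next
      case False
      then have ki: "k < i" by simp
      have "Fk k = bw (Suc (i - Suc k))" using ki by (simp add: Fk_def Suc_diff_Suc)
      moreover have "Fk (Suc k) = bw (i - Suc k)" by (rule FkS[OF ki])
      moreover have "connected_through (bw (i - Suc k)) (bw (Suc (i - Suc k))) (hyp (be (i - Suc (i - Suc k))))"
        using BW[of "i - Suc k"] ki by simp
      moreover have "i - Suc (i - Suc k) = k" using ki by simp
      ultimately show ?thesis using ct_sym by metis
    qed
    then show "connected_through (Cs ! k) (Cs ! Suc k) (hyp (be k))"
      using k by (simp add: Cs_def del: upt_Suc)
  next
    show "Cs ! i = C" using i by (simp add: Cs_def Fk_def fw0 del: upt_Suc)
  qed
  have "\<exists>!Cs. good Cs" using \<open>good Cs\<close> uniq by blast
  then show ?thesis unfolding equiv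
    by (metis (no_types, lifting) fst_conv)
qed

end
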